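(* Let $k$ be a nonperfect field of characteristic $2$, let $a\in k\setminus k^2$, let $G=PGL_2$ and, writing $\bar A$ for the image in $PGL_2$ of $A\in GL_2$, let $u=\overline{\begin{pmatrix}0&a\\1&0\end{pmatrix}}\in G(k)$ and $U=\langle u\rangle$. Then $U$ is $G$-irreducible over $k$ (in particular $G$-completely reducible over $k$), but $U$ is not $G$-completely reducible.
   Context: For a connected reductive $k$-group $G$, a closed subgroup $H$ is $G$-completely reducible over $k$ if whenever $H$ is contained in a $k$-parabolic subgroup $P$ of $G$, $H$ is contained in some $k$-Levi subgroup of $P$; $H$ is $G$-irreducible over $k$ if it lies in no proper $k$-parabolic subgroup. "$G$-completely reducible" means $G$-completely reducible over $\bar k$. *)

theory Defs
  imports "HOL-Analysis.Analysis" "HOL-Computational_Algebra.Polynomial"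
begin

type_synonym 'a mat2 = "'a^2^2"

definition is_subfield :: "'a::field set \<Rightarrow> bool" where
  "is_subfield F \<longleftrightarrow> 0 \<in> F \<and> 1 \<in> F \<and>
     (\<forall>x\<in>F. \<forall>y\<in>F. x + y \<in> F \<and> x * y \<in> F) \<and>
     (\<forall>x\<in>F. - x \<in> F \<and> inverse x \<in> F)"

definition algebraic_over :: "'a::field set \<Rightarrow> 'a \<Rightarrow> bool" where
  "algebraic_over F x \<longleftrightarrow> (\<exists>p::'a poly. p \<noteq> 0 \<and> (\<forall>i. coeff p i \<in> F) \<and> poly p x = 0)"

definition mat2 :: "'a \<Rightarrow> 'a \<Rightarrow> 'a \<Rightarrow> 'a \<Rightarrow> 'a mat2" where
  "mat2 a b c d = (\<chi> i j. if i = 1 then (if j = 1 then a else b) else (if j = 1 then c else d))"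

definition GL2 :: "'a::field set \<Rightarrow> 'a mat2 set" where
  "GL2 F = {A. (\<forall>i j. A $ i $ j \<in> F) \<and> det A \<noteq> 0}"

definition pgl_class :: "'a::field mat2 \<Rightarrow> 'a mat2 set" where
  "pgl_class A = {B. \<exists>c. c \<noteq> 0 \<and> B = (\<chi> i j. c * A $ i $ j)}"

definition PGL2 :: "'a::field mat2 set set" where
  "PGL2 = pgl_class ` GL2 UNIV"

definition pgl_mult :: "'a::field mat2 set \<Rightarrow> 'a mat2 set \<Rightarrow> 'a mat2 set" where
  "pgl_mult X Y = {A ** B | A B. A \<in> X \<and> B \<in> Y}"

definition pgl_inv :: "'a::field mat2 set \<Rightarrow> 'a mat2 set" where
  "pgl_inv X = {B. \<exists>A\<in>X. A ** B = mat 1}"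

definition pgl_one :: "'a::field mat2 set" where
  "pgl_one = pgl_class (mat 1)"

definition pgl_subgroup :: "'a::field mat2 set set \<Rightarrow> bool" where
  "pgl_subgroup H \<longleftrightarrow> H \<subseteq> PGL2 \<and> pgl_one \<in> H \<and>
     (\<forall>X\<in>H. \<forall>Y\<in>H. pgl_mult X Y \<in> H) \<and> (\<forall>X\<in>H. pgl_inv X \<in> H)"

definition pgl_generated :: "'a::field mat2 set set \<Rightarrow> 'a mat2 set set" where
  "pgl_generated S = \<Inter>{H. pgl_subgroup H \<and> S \<subseteq> H}"

definition Borel2 :: "'a::field mat2 set" where
  "Borel2 = {A \<in> GL2 UNIV. A $ 2 $ 1 = 0}"

definition Torus2 :: "'a::field mat2 set" where
  "Torus2 = {A \<in> GL2 UNIV. A $ 2 $ 1 = 0 \<and> A $ 1 $ 2 = 0}"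

text \<open>Conjugate g S g^{-1} (for invertible g).\<close>
definition conj2 :: "'a::field mat2 \<Rightarrow> 'a mat2 set \<Rightarrow> 'a mat2 set" where
  "conj2 g S = {A. \<exists>s\<in>S. A ** g = g ** s}"

text \<open>F-parabolic subgroups of PGL_2: G itself, or the image of a Borel subgroup
  g B g^{-1} with g in GL_2(F) (i.e. an F-Borel subgroup).\<close>
definition parabolic_over :: "'a::field set \<Rightarrow> 'a mat2 set set \<Rightarrow> bool" where
  "parabolic_over F P \<longleftrightarrow> P = PGL2 \<or> (\<exists>g\<in>GL2 F. P = pgl_class ` conj2 g Borel2)"

text \<open>F-Levi subgroups of an F-parabolic P: G is its own Levi; the F-Levi subgroups of
  an F-Borel subgroup are its maximal tori defined over F, i.e. the images of
  h T h^{-1} with h in GL_2(F) contained in P.\<close>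
definition levi_over :: "'a::field set \<Rightarrow> 'a mat2 set set \<Rightarrow> 'a mat2 set set \<Rightarrow> bool" where
  "levi_over F P L \<longleftrightarrow>
     (P = PGL2 \<and> L = PGL2) \<or>
     (P \<noteq> PGL2 \<and> (\<exists>h\<in>GL2 F. L = pgl_class ` conj2 h Torus2 \<and> L \<subseteq> P))"

definition cr_over :: "'a::field set \<Rightarrow> 'a mat2 set set \<Rightarrow> bool" where
  "cr_over F H \<longleftrightarrow> (\<forall>P. parabolic_over F P \<and> H \<subseteq> P \<longrightarrow> (\<exists>L. levi_over F P L \<and> H \<subseteq> L))"

definition irreducible_over :: "'a::field set \<Rightarrow> 'a mat2 set set \<Rightarrow> bool" where
  "irreducible_over F H \<longleftrightarrow> (\<forall>P. parabolic_over F P \<and> H \<subseteq> P \<longrightarrow> P = PGL2)"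

text \<open>G-complete reducibility = complete reducibility over the algebraically closed field.\<close>
definition completely_reducible :: "'a::alg_closed_field mat2 set set \<Rightarrow> bool" where
  "completely_reducible H \<longleftrightarrow> cr_over UNIV H"

end

theory Submission
  imports Defs
begin

definition sc :: "'a::field \<Rightarrow> 'a mat2 \<Rightarrow> 'a mat2" where
  "sc c A = (\<chi> i j. c * A $ i $ j)"

lemma mat2_nth[simp]:
  "mat2 a b c d $ 1 $ 1 = a" "mat2 a b c d $ 1 $ 2 = b"
  "mat2 a b c d $ 2 $ 1 = c" "mat2 a b c d $ 2 $ 2 = d"
  by (simp_all add: mat2_def)

lemma mat2_eta: "(A::'a mat2) = mat2 (A$1$1) (A$1$2) (A$2$1) (A$2$2)"
  unfolding mat2_def by (auto simp: vec_eq_iff forall_2)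

lemma mat2_eq_iff: "mat2 a b c d = mat2 a' b' c' d' \<longleftrightarrow> a = a' \<and> b = b' \<and> c = c' \<and> d = d'"
  by (metis mat2_nth)

lemma mat2_mult: "mat2 a b c d ** mat2 e f g h =
   mat2 (a*e+b*g) (a*f+b*h) (c*e+d*g) (c*f+d*h)"
  by (subst mat2_eta) (simp add: matrix_matrix_mult_def sum_2)

lemma mat2_det: "det (mat2 a b c (d::'a::field)) = a*d - b*c"
  by (simp add: det_2)

lemma mat2_sc: "sc e (mat2 a b c d) = mat2 (e*a) (e*b) (e*c) (e*d)"
  by (subst mat2_eta) (simp add: sc_def)

lemma mat2_one: "mat 1 = mat2 1 0 0 1"
  by (subst mat2_eta) (simp add: mat_def)

lemma class_sc: "pgl_class A = {B. \<exists>c. c \<noteq> 0 \<and> B = sc c A}"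
  by (simp add: pgl_class_def sc_def)

lemma sc_mat2_mult: "sc c A ** sc d B = sc (c*d) (A ** B)"
  by (simp add: vec_eq_iff matrix_matrix_mult_def sc_def sum_2 algebra_simps)

lemma sc_sc: "sc c (sc d A) = sc (c*d) A"
  by (simp add: sc_def vec_eq_iff)

lemma sc_1: "sc 1 A = A"
  by (simp add: sc_def vec_eq_iff)

lemma class_sc_eq: "c \<noteq> 0 \<Longrightarrow> pgl_class (sc c A) = pgl_class A"
  unfolding class_sc
proof (intro set_eqI iffI; elim CollectE exE conjE; intro CollectI)
  fix B d assume "c \<noteq> 0" "d \<noteq> 0" "B = sc d (sc c A)"
  then show "\<exists>e. e \<noteq> 0 \<and> B = sc e A" by (intro exI[of _ "d*c"]) (auto simp: sc_sc)
next
  fix B d assume "c \<noteq> 0" "d \<noteq> 0" "B = sc d A"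
  then show "\<exists>e. e \<noteq> 0 \<and> B = sc e (sc c A)"
    by (intro exI[of _ "d / c"]) (auto simp: sc_sc)
qed

lemma mem_class_self: "A \<in> pgl_class A"
  unfolding class_sc by (auto intro: exI[of _ 1] simp: sc_1)

lemma class_eqD: "pgl_class A = pgl_class B \<Longrightarrow> \<exists>c. c \<noteq> 0 \<and> A = sc c B"
  using mem_class_self[of A] unfolding class_sc by auto

lemma pgl_mult_class: "pgl_mult (pgl_class A) (pgl_class B) = pgl_class (A ** B)"
proof (intro set_eqI iffI)
  fix Z assume "Z \<in> pgl_mult (pgl_class A) (pgl_class B)"
  then obtain c d where "c \<noteq> 0" "d \<noteq> 0" "Z = sc c A ** sc d B"
    unfolding pgl_mult_def class_sc by blast
  then show "Z \<in> pgl_class (A ** B)" unfolding class_sc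
    by (intro CollectI exI[of _ "c*d"]) (auto simp: sc_mat2_mult)
next
  fix Z assume "Z \<in> pgl_class (A ** B)"
  then obtain e where "e \<noteq> 0" "Z = sc e (A ** B)" unfolding class_sc by blast
  then have "Z = sc e A ** sc 1 B" "sc e A \<in> pgl_class A" "sc 1 B \<in> pgl_class B"
    unfolding class_sc by (auto simp: sc_mat2_mult intro: exI[of _ 1])
  then show "Z \<in> pgl_mult (pgl_class A) (pgl_class B)" unfolding pgl_mult_def by blast
qed

lemma obtain_mat2: obtains p q r s where "B = mat2 p q r s"
  using mat2_eta by blast

lemma pgl_inv_I: "pgl_inv (pgl_class (mat 1)) = pgl_class (mat 1 :: 'a::field mat2)"
proof (intro set_eqI iffI)
  fix B :: "'a mat2" assume "B \<in> pgl_inv (pgl_class (mat 1))"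
  then obtain c where c: "c \<noteq> 0" "sc c (mat 1) ** B = mat 1"
    unfolding pgl_inv_def class_sc by blast
  obtain x1 x2 x3 x4 where B: "B = mat2 x1 x2 x3 x4" by (rule obtain_mat2)
  from c have "c*x1 = 1" "c*x2 = 0" "c*x3 = 0" "c*x4 = 1"
    by (simp_all add: B mat2_one mat2_sc mat2_mult mat2_eq_iff)
  with c have "B = sc (1/c) (mat 1)"
    by (simp add: B mat2_one mat2_sc mat2_eq_iff field_simps)
  with c show "B \<in> pgl_class (mat 1)" unfolding class_sc by (intro CollectI exI[of _ "1/c"]) auto
next
  fix B :: "'a mat2" assume "B \<in> pgl_class (mat 1)"
  then obtain d where d: "d \<noteq> 0" "B = sc d (mat 1)" unfolding class_sc by blast
  then have "sc (1/d) (mat 1) ** B = mat 1" "sc (1/d) (mat 1) \<in> pgl_class (mat 1)"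
    unfolding class_sc by (auto simp: mat2_one mat2_sc mat2_mult mat2_eq_iff)
  then show "B \<in> pgl_inv (pgl_class (mat 1))" unfolding pgl_inv_def by blast
qed

lemma pgl_inv_u:
  assumes a: "(a::'a::field) \<noteq> 0"
  shows "pgl_inv (pgl_class (mat2 0 a 1 0)) = pgl_class (mat2 0 a 1 0)"
proof (intro set_eqI iffI)
  fix B :: "'a mat2" assume "B \<in> pgl_inv (pgl_class (mat2 0 a 1 0))"
  then obtain c where c: "c \<noteq> 0" "sc c (mat2 0 a 1 0) ** B = mat 1"
    unfolding pgl_inv_def class_sc by blast
  obtain x1 x2 x3 x4 where B: "B = mat2 x1 x2 x3 x4" by (rule obtain_mat2)
  from c have "c*a*x3 = 1" "c*a*x4 = 0" "c*x1 = 0" "c*x2 = 1"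
    by (simp_all add: B mat2_one mat2_sc mat2_mult mat2_eq_iff mult.assoc)
  with c a have "B = sc (1/(c*a)) (mat2 0 a 1 0)"
    by (simp add: B mat2_one mat2_sc mat2_eq_iff field_simps)
  with c a show "B \<in> pgl_class (mat2 0 a 1 0)" unfolding class_sc by (intro CollectI exI[of _ "1/(c*a)"]) auto
next
  fix B :: "'a mat2" assume "B \<in> pgl_class (mat2 0 a 1 0)"
  then obtain d where d: "d \<noteq> 0" "B = sc d (mat2 0 a 1 0)" unfolding class_sc by blast
  then have "sc (1/(d*a)) (mat2 0 a 1 0) ** B = mat 1" "sc (1/(d*a)) (mat2 0 a 1 0) \<in> pgl_class (mat2 0 a 1 0)"
    unfolding class_sc using a by (auto simp: mat2_one mat2_sc mat2_mult mat2_eq_iff)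
  then show "B \<in> pgl_inv (pgl_class (mat2 0 a 1 0))" unfolding pgl_inv_def by blast
qed

lemma u_sq: "mat2 0 a 1 0 ** mat2 0 a 1 0 = sc a (mat 1 :: 'a::field mat2)"
  by (simp add: mat2_one mat2_sc mat2_mult mat2_eq_iff)

lemma in_PGL2: "det A \<noteq> 0 \<Longrightarrow> pgl_class A \<in> PGL2"
  unfolding PGL2_def GL2_def by auto

lemma sub_U:
  assumes a: "(a::'a::field) \<noteq> 0"
  shows "pgl_subgroup {pgl_one, pgl_class (mat2 0 a 1 0)}"
proof -
  let ?u = "mat2 0 a 1 0 :: 'a mat2"
  have m: "pgl_mult X Y \<in> {pgl_class (mat 1), pgl_class ?u}"
    if "X \<in> {pgl_class (mat 1), pgl_class ?u}" "Y \<in> {pgl_class (mat 1), pgl_class ?u}" for X Y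
    using that a by (auto simp: pgl_mult_class u_sq class_sc_eq)
  have "pgl_class (mat 1) \<in> PGL2" "pgl_class ?u \<in> PGL2"
    using a by (auto intro!: in_PGL2 simp: mat2_det)
  then show ?thesis using m a unfolding pgl_subgroup_def pgl_one_def
    by (auto simp: pgl_inv_I pgl_inv_u)
qed

lemma U_bounds:
  assumes a: "(a::'a::field) \<noteq> 0"
  shows "pgl_generated {pgl_class (mat2 0 a 1 0)} \<subseteq> {pgl_one, pgl_class (mat2 0 a 1 0)}"
    "pgl_class (mat2 0 a 1 0) \<in> pgl_generated {pgl_class (mat2 0 a 1 0)}"
  using sub_U[OF a] unfolding pgl_generated_def by auto

lemma conj_lemma:
  assumes "pgl_class X = pgl_class A" "A \<in> conj2 g S"
  shows "\<exists>s\<in>S. \<exists>c. c \<noteq> 0 \<and> X ** g = g ** sc c s"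
proof -
  obtain c where c: "c \<noteq> 0" "X = sc c A" using class_eqD[OF assms(1)] by blast
  obtain s where s: "s \<in> S" "A ** g = g ** s" using assms(2) unfolding conj2_def by blast
  have "X ** g = sc c A ** sc 1 g" by (simp add: c sc_1)
  also have "\<dots> = sc c (g ** s)" by (simp add: sc_mat2_mult s)
  also have "\<dots> = sc 1 g ** sc c s" by (simp add: sc_mat2_mult)
  finally show ?thesis using s c by (auto simp: sc_1)
qed

lemma sc_nth: "sc c A $ i $ j = c * A $ i $ j"
  by (simp add: sc_def)

lemma irred_part:
  fixes k :: "'a::field set"
  assumes k: "is_subfield k" and g: "g \<in> GL2 k" and a: "\<forall>y\<in>k. a \<noteq> y ^ 2"
  shows "pgl_class (mat2 0 a 1 0) \<notin> pgl_class ` conj2 g Borel2"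
proof
  assume "pgl_class (mat2 0 a 1 0) \<in> pgl_class ` conj2 g Borel2"
  then obtain A where "A \<in> conj2 g Borel2" "pgl_class (mat2 0 a 1 0) = pgl_class A" by auto
  from conj_lemma[OF this(2,1)] obtain s c where s: "s \<in> Borel2"
    and eq: "mat2 0 a 1 0 ** g = g ** sc c s" by blast
  obtain x y z w where gm: "g = mat2 x y z w" by (rule obtain_mat2)
  obtain t1 t2 t3 t4 where tm: "sc c s = mat2 t1 t2 t3 t4" by (rule obtain_mat2)
  have t3: "t3 = 0" using s arg_cong[OF tm, of "\<lambda>M. M $ 2 $ 1"] by (simp add: Borel2_def sc_nth)
  from eq have e1: "a*z = x*t1" and e2: "x = z*t1"
    by (simp_all add: gm tm t3 mat2_mult mat2_eq_iff)
  have xk: "x \<in> k" "z \<in> k" using g unfolding GL2_def gm by (metis (mono_tags) mat2_nth mem_Collect_eq)+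
  have dg: "x*w - y*z \<noteq> 0" using g by (simp add: GL2_def gm mat2_det)
  have z0: "z \<noteq> 0" using dg e2 by auto
  have t1: "t1 = x * inverse z" using z0 e2 by (simp add: field_simps)
  have t1k: "t1 \<in> k" using k xk unfolding is_subfield_def t1 by blast
  have "a = t1^2" using e1 e2 z0 by (simp add: power2_eq_square)
  with a t1k show False by blast
qed

lemma not_in_torus:
  fixes a :: "'a::field"
  assumes two: "(2::'a) = 0" and h: "h \<in> GL2 UNIV"
  shows "pgl_class (mat2 0 a 1 0) \<notin> pgl_class ` conj2 h Torus2"
proof
  assume "pgl_class (mat2 0 a 1 0) \<in> pgl_class ` conj2 h Torus2"
  then obtain A where "A \<in> conj2 h Torus2" "pgl_class (mat2 0 a 1 0) = pgl_class A" by auto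
  from conj_lemma[OF this(2,1)] obtain s c where s: "s \<in> Torus2"
    and eq: "mat2 0 a 1 0 ** h = h ** sc c s" by blast
  obtain x y z w where gm: "h = mat2 x y z w" by (rule obtain_mat2)
  obtain t1 t2 t3 t4 where tm: "sc c s = mat2 t1 t2 t3 t4" by (rule obtain_mat2)
  have t3: "t3 = 0" using s arg_cong[OF tm, of "\<lambda>M. M $ 2 $ 1"] by (simp add: Torus2_def sc_nth)
  have t2: "t2 = 0" using s arg_cong[OF tm, of "\<lambda>M. M $ 1 $ 2"] by (simp add: Torus2_def sc_nth)
  have "mat2 (a*z) (a*w) x y = mat2 (x*t1) (y*t4) (z*t1) (w*t4)"
    using eq unfolding gm tm t3 t2 mat2_mult by simp
  then have e1: "a*z = x*t1" and e2: "x = z*t1" and e3: "a*w = y*t4" and e4: "y = w*t4"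
    unfolding mat2_eq_iff by auto
  have dg: "x*w - y*z \<noteq> 0" using h by (simp add: GL2_def gm mat2_det)
  have z0: "z \<noteq> 0" using dg e2 by auto
  have w0: "w \<noteq> 0" using dg e4 by auto
  have "a = t1^2" using e1 e2 z0 by (simp add: power2_eq_square)
  moreover have "a = t4^2" using e3 e4 w0 by (simp add: power2_eq_square)
  ultimately have "(t1 - t4)^2 = 2 * (t4^2 - t1 * t4)" by (simp add: power2_eq_square algebra_simps)
  then have "t1 = t4" using two by simp
  then show False using dg e2 e4 by (simp add: algebra_simps)
qed

lemma not_cr:
  fixes a :: "'a::alg_closed_field"
  assumes two: "(2::'a) = 0" and a0: "a \<noteq> 0"
  shows "\<not> completely_reducible (pgl_generated {pgl_class (mat2 0 a 1 0)})"
proof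
  let ?U = "pgl_generated {pgl_class (mat2 0 a 1 0)}"
  assume cr: "completely_reducible ?U"
  obtain b where b: "b ^ 2 = a" using nth_root_exists[of 2 a] by auto
  define g0 where "g0 = mat2 b 1 1 (0::'a)"
  have dg: "det g0 = -1" by (simp add: g0_def mat2_det)
  have g0: "g0 \<in> GL2 UNIV" using dg by (simp add: GL2_def)
  define P where "P = pgl_class ` conj2 g0 Borel2"
  have par: "parabolic_over UNIV P" using g0 unfolding parabolic_over_def P_def by blast
  have I_in: "pgl_one \<in> P"
  proof -
    have "mat 1 ** g0 = g0 ** mat 1" by simp
    moreover have "mat 1 \<in> (Borel2 :: 'a mat2 set)" by (simp add: Borel2_def GL2_def mat2_one mat2_det)
    ultimately have "mat 1 \<in> conj2 g0 Borel2" unfolding conj2_def by blast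
    then show ?thesis unfolding P_def pgl_one_def by blast
  qed
  have u_in: "pgl_class (mat2 0 a 1 0) \<in> P"
  proof -
    have "mat2 0 a 1 0 ** g0 = g0 ** mat2 b 1 0 (-b)"
      using b by (simp add: g0_def mat2_mult mat2_eq_iff power2_eq_square)
    moreover have "mat2 b 1 0 (-b) \<in> (Borel2 :: 'a mat2 set)"
      using b a0 by (auto simp: Borel2_def GL2_def mat2_det power2_eq_square)
    ultimately have "mat2 0 a 1 0 \<in> conj2 g0 Borel2" unfolding conj2_def by blast
    then show ?thesis unfolding P_def by blast
  qed
  have UP: "?U \<subseteq> P" using U_bounds[OF a0] I_in u_in by blast
  have PG: "P \<noteq> PGL2"
  proof
    assume "P = PGL2"
    moreover have "pgl_class (mat2 1 1 0 1) \<in> (PGL2 :: 'a mat2 set set)" by (rule in_PGL2) (simp add: mat2_det)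
    ultimately obtain A where "A \<in> conj2 g0 Borel2" "pgl_class (mat2 1 1 0 1) = pgl_class A"
      unfolding P_def by auto
    from conj_lemma[OF this(2,1)] obtain s c where s: "s \<in> Borel2"
      and eq: "mat2 1 1 0 1 ** g0 = g0 ** sc c s" by blast
    obtain t1 t2 t3 t4 where tm: "sc c s = mat2 t1 t2 t3 t4" by (rule obtain_mat2)
    have t3: "t3 = 0" using s arg_cong[OF tm, of "\<lambda>M. M $ 2 $ 1"] by (simp add: Borel2_def sc_nth)
    from eq have "b + 1 = b * t1" "1 = t1" by (simp_all add: g0_def tm t3 mat2_mult mat2_eq_iff)
    then show False by simp
  qed
  from cr par UP obtain L where L: "levi_over UNIV P L" "?U \<subseteq> L"
    unfolding completely_reducible_def cr_over_def by blast
  then obtain h where h: "h \<in> GL2 UNIV" "L = pgl_class ` conj2 h Torus2"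
    using PG unfolding levi_over_def by blast
  have "pgl_class (mat2 0 a 1 0) \<in> L" using L(2) U_bounds(2)[OF a0] by blast
  with not_in_torus[OF two h(1)] h(2) show False by blast
qed

theorem mainTheorem9:
  fixes k :: "'K::alg_closed_field set" and a :: 'K
  assumes "is_subfield k"
    and "\<forall>x::'K. algebraic_over k x"
    and "CHAR('K) = 2"
    and "\<exists>x\<in>k. \<forall>y\<in>k. x \<noteq> y ^ 2"
    and "a \<in> k" and "\<forall>y\<in>k. a \<noteq> y ^ 2"
  shows "irreducible_over k (pgl_generated {pgl_class (mat2 0 a 1 0)}) \<and>
         cr_over k (pgl_generated {pgl_class (mat2 0 a 1 0)}) \<and>
         \<not> completely_reducible (pgl_generated {pgl_class (mat2 0 a 1 0)})"
proof -
  let ?U = "pgl_generated {pgl_class (mat2 0 a 1 0)}"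
  have k0: "0 \<in> k" using assms(1) by (simp add: is_subfield_def)
  have "a \<noteq> 0 ^ 2" using assms(6) k0 by blast
  then have a0: "a \<noteq> 0" by simp
  have "of_nat 2 = (0::'K)" using assms(3) by (simp only: of_nat_eq_0_iff_char_dvd dvd_refl)
  then have two: "(2::'K) = 0" by simp
  have irr: "irreducible_over k ?U"
    unfolding irreducible_over_def
  proof (intro allI impI)
    fix P assume "parabolic_over k P \<and> ?U \<subseteq> P"
    then have P: "parabolic_over k P" "pgl_class (mat2 0 a 1 0) \<in> P"
      using U_bounds(2)[OF a0] by blast+
    show "P = PGL2"
    proof (rule ccontr)
      assume "P \<noteq> PGL2"
      then obtain g where g: "g \<in> GL2 k" "P = pgl_class ` conj2 g Borel2"
        using P(1) unfolding parabolic_over_def by blast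
      have "pgl_class (mat2 0 a 1 0) \<notin> P"
        unfolding g(2) by (rule irred_part[OF assms(1) g(1) assms(6)])
      then show False using P(2) by simp
    qed
  qed
  have "{pgl_one, pgl_class (mat2 0 a 1 0)} \<subseteq> PGL2"
    using sub_U[OF a0] unfolding pgl_subgroup_def by (elim conjE)
  then have UG: "?U \<subseteq> PGL2" by (rule subset_trans[OF U_bounds(1)[OF a0]])
  have cr: "cr_over k ?U"
    unfolding cr_over_def
  proof (intro allI impI)
    fix P assume "parabolic_over k P \<and> ?U \<subseteq> P"
    then have "P = PGL2" using irr unfolding irreducible_over_def by blast
    then show "\<exists>L. levi_over k P L \<and> ?U \<subseteq> L"
      using UG by (intro exI[of _ PGL2]) (simp add: levi_over_def)
  qed
  show ?thesis using irr cr not_cr[OF two a0] by blast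
qed

end
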